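(* Let $(X,d_X)$ be a flexible locally compact noncompact Polish space, and let $(Y,d_Y)$ be a locally compact Polish space containing a nonempty compact clopen subset $Z$. Equip $X\times Y$ with the metric $d((x,y),(x',y'))=\max(d_X(x,x'),d_Y(y,y'))$. Then $(X\times Y,d)$ is flexible; indeed, if the sets $Y_n$ and homeomorphisms $\phi_{n,m}$ witness flexibility of $X$, then the sets $Y_n\times Z$ and homeomorphisms $\phi_{n,m}\times\mathrm{id}_Z$ witness flexibility of $X\times Y$. In particular, if $Y$ is a nonempty compact Polish space then $X\times Y$ is flexible.
   Context: For closed $W$ in a space $S$ with metric $\rho$, $\partial_S W=W\cap\overline{S\setminus W}$ and $\mathrm{Homeo}_{\partial}(W)$ is the group of homeomorphisms of $W$ fixing each point of $\partial_S W$; such $\phi$ extends to a homeomorphism $\tilde\phi$ of $S$ equal to the identity off $W$, with radius $r(\phi)=\sup_{s\in S}\rho(s,\tilde\phi(s))$. A locally compact noncompact Polish space $S$ with compatible metric $\rho$ is flexible if there are pairwise disjoint sets $W_n\subseteq S$ and $\phi_{n,m}\in\mathrm{Homeo}_\partial(W_n)$ ($n,m\in\mathbb N$) such that: (1) each $W_n$ is compact and no compact subset of $S$ meets infinitely many $W_n$; (2) for each $n$, $(r(\phi_{n,m}))_m$ is decreasing and tends to $0$, and $r(\phi_{n,m})\ne0$ for all $n,m$. *)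

theory Defs
  imports "HOL-Analysis.Analysis"
begin

definition Polish_top :: "'a topology \<Rightarrow> bool" where
  "Polish_top T \<longleftrightarrow> completely_metrizable_space T \<and> separable_space T"

definition bdry_in :: "'a set \<Rightarrow> ('a \<Rightarrow> 'a \<Rightarrow> real) \<Rightarrow> 'a set \<Rightarrow> 'a set" where
  "bdry_in M d W = W \<inter> (Metric_space.mtopology M d closure_of (M - W))"

definition Homeo_bd :: "'a set \<Rightarrow> ('a \<Rightarrow> 'a \<Rightarrow> real) \<Rightarrow> 'a set \<Rightarrow> ('a \<Rightarrow> 'a) set" where
  "Homeo_bd M d W = {\<phi>. homeomorphic_map (subtopology (Metric_space.mtopology M d) W)
                                          (subtopology (Metric_space.mtopology M d) W) \<phi>
                        \<and> (\<forall>s\<in>bdry_in M d W. \<phi> s = s)}"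

definition ext_id :: "'a set \<Rightarrow> ('a \<Rightarrow> 'a) \<Rightarrow> 'a \<Rightarrow> 'a" where
  "ext_id W \<phi> s = (if s \<in> W then \<phi> s else s)"

definition radius :: "'a set \<Rightarrow> ('a \<Rightarrow> 'a \<Rightarrow> real) \<Rightarrow> 'a set \<Rightarrow> ('a \<Rightarrow> 'a) \<Rightarrow> real" where
  "radius M d W \<phi> = (SUP s\<in>M. d s (ext_id W \<phi> s))"

definition flex_witness :: "'a set \<Rightarrow> ('a \<Rightarrow> 'a \<Rightarrow> real) \<Rightarrow> (nat \<Rightarrow> 'a set) \<Rightarrow> (nat \<Rightarrow> nat \<Rightarrow> 'a \<Rightarrow> 'a) \<Rightarrow> bool" where
  "flex_witness M d W \<phi> \<longleftrightarrow>
     disjoint_family W \<and>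
     (\<forall>n. W n \<subseteq> M \<and> compactin (Metric_space.mtopology M d) (W n)) \<and>
     (\<forall>K. compactin (Metric_space.mtopology M d) K \<longrightarrow> finite {n. K \<inter> W n \<noteq> {}}) \<and>
     (\<forall>n m. \<phi> n m \<in> Homeo_bd M d (W n)) \<and>
     (\<forall>n. decseq (\<lambda>m. radius M d (W n) (\<phi> n m))) \<and>
     (\<forall>n. (\<lambda>m. radius M d (W n) (\<phi> n m)) \<longlonglongrightarrow> 0) \<and>
     (\<forall>n m. radius M d (W n) (\<phi> n m) \<noteq> 0)"

definition flexible :: "'a set \<Rightarrow> ('a \<Rightarrow> 'a \<Rightarrow> real) \<Rightarrow> bool" where
  "flexible M d \<longleftrightarrow> Metric_space M d \<and>
     locally_compact_space (Metric_space.mtopology M d) \<and>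
     \<not> compact_space (Metric_space.mtopology M d) \<and>
     Polish_top (Metric_space.mtopology M d) \<and>
     (\<exists>W \<phi>. flex_witness M d W \<phi>)"

definition max_dist :: "('a \<Rightarrow> 'a \<Rightarrow> real) \<Rightarrow> ('b \<Rightarrow> 'b \<Rightarrow> real) \<Rightarrow> 'a \<times> 'b \<Rightarrow> 'a \<times> 'b \<Rightarrow> real" where
  "max_dist d1 d2 = (\<lambda>(x,y) (x',y'). max (d1 x x') (d2 y y'))"

end

theory Submission
  imports Defs
begin


lemma max_dist_metric:
  assumes X: "Metric_space X dX" and Y: "Metric_space Y dY"
  shows "Metric_space (X\<times>Y) (max_dist dX dY)"
proof
  interpret X: Metric_space X dX by (fact X)
  interpret Y: Metric_space Y dY by (fact Y)
  fix x y z
  show "0 \<le> max_dist dX dY x y" by (auto simp: max_dist_def case_prod_unfold max_def)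
  show "max_dist dX dY x y = max_dist dX dY y x"
    by (simp add: max_dist_def case_prod_unfold X.commute Y.commute)
  show "x \<in> X\<times>Y \<Longrightarrow> y \<in> X\<times>Y \<Longrightarrow> max_dist dX dY x y = 0 \<longleftrightarrow> x = y"
    by (auto simp: max_dist_def case_prod_unfold max_def prod_eq_iff)
      (smt (verit) X.nonneg X.zero Y.nonneg Y.zero)+
  show "x \<in> X\<times>Y \<Longrightarrow> y \<in> X\<times>Y \<Longrightarrow> z \<in> X\<times>Y \<Longrightarrow> max_dist dX dY x z \<le> max_dist dX dY x y + max_dist dX dY y z"
    using X.triangle[of "fst x" "fst y" "fst z"] Y.triangle[of "snd x" "snd y" "snd z"]
      X.nonneg Y.nonneg
    by (auto simp: max_dist_def case_prod_unfold mem_Times_iff) 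
qed

lemma mball_max_dist:
  assumes X: "Metric_space X dX" and Y: "Metric_space Y dY"
  shows "Metric_space.mball (X\<times>Y) (max_dist dX dY) (x,y) r
       = Metric_space.mball X dX x r \<times> Metric_space.mball Y dY y r"
proof -
  interpret P: Metric_space "X\<times>Y" "max_dist dX dY" using max_dist_metric[OF X Y] .
  interpret X: Metric_space X dX by (fact X)
  interpret Y: Metric_space Y dY by (fact Y)
  show ?thesis unfolding set_eq_iff P.in_mball X.in_mball Y.in_mball mem_Times_iff
    by (auto simp: max_dist_def)
qed

lemma mtopology_max_dist:
  assumes X: "Metric_space X dX" and Y: "Metric_space Y dY"
  shows "Metric_space.mtopology (X\<times>Y) (max_dist dX dY)
       = prod_topology (Metric_space.mtopology X dX) (Metric_space.mtopology Y dY)"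
  unfolding prod_topology_def
proof (rule topology_base_unique [symmetric])
  interpret P: Metric_space "X\<times>Y" "max_dist dX dY" using max_dist_metric[OF X Y] .
  interpret M1: Metric_space X dX by (fact X)
  interpret M2: Metric_space Y dY by (fact Y)
  {
  fix U
  assume "U \<in> {S \<times> T |S T. openin M1.mtopology S \<and> openin M2.mtopology T}"
  then obtain S T where Ueq: "U = S \<times> T"
    and S: "openin M1.mtopology S" and T: "openin M2.mtopology T"
    by auto
  have "S \<subseteq> X"
    using M1.openin_mtopology S by auto
  have "T \<subseteq> Y"
    using M2.openin_mtopology T by auto
  show "openin P.mtopology U"
    unfolding P.openin_mtopology
  proof (intro conjI strip)
    show "U \<subseteq> X \<times> Y"
      using Ueq by (simp add: Sigma_mono \<open>S \<subseteq> X\<close> \<open>T \<subseteq> Y\<close>)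
    fix z
    assume "z \<in> U"
    then obtain x1 x2 where "x1 \<in> S" "x2 \<in> T" and zeq: "z = (x1,x2)"
      using Ueq by blast
    obtain r1 where "r1>0" and r1: "M1.mball x1 r1 \<subseteq> S"
      by (meson M1.openin_mtopology \<open>openin M1.mtopology S\<close> \<open>x1 \<in> S\<close>)
    obtain r2 where "r2>0" and r2: "M2.mball x2 r2 \<subseteq> T"
      by (meson M2.openin_mtopology \<open>openin M2.mtopology T\<close> \<open>x2 \<in> T\<close>)
    have "P.mball (x1,x2) (min r1 r2) \<subseteq> U"
      unfolding mball_max_dist[OF X Y] using Ueq r1 r2 by force
    then show "\<exists>r>0. P.mball z r \<subseteq> U"
      by (metis zeq \<open>0 < r1\<close> \<open>0 < r2\<close> min_less_iff_conj)
  qed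
  }
  {
  fix U z
  assume "openin P.mtopology U" and "z \<in> U"
  then have "U \<subseteq> X \<times> Y"
    by (simp add: P.openin_mtopology)
  then obtain x y where "x \<in> X" "y \<in> Y" and zeq: "z = (x,y)"
    using \<open>z \<in> U\<close> by blast
  obtain r where "r>0" and r: "P.mball (x,y) r \<subseteq> U"
    by (metis P.openin_mtopology \<open>openin P.mtopology U\<close> \<open>z \<in> U\<close> zeq)
  define B1 where "B1 \<equiv> M1.mball x r"
  define B2 where "B2 \<equiv> M2.mball y r"
  have "openin M1.mtopology B1" "openin M2.mtopology B2"
    by (simp_all add: B1_def B2_def)
  moreover have "(x,y) \<in> B1 \<times> B2"
    using \<open>r > 0\<close> by (simp add: \<open>x \<in> X\<close> \<open>y \<in> Y\<close> B1_def B2_def)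
  moreover have "B1 \<times> B2 \<subseteq> U"
    using r by (simp add: B1_def B2_def mball_max_dist[OF X Y])
  ultimately show "\<exists>B. B \<in> {S \<times> T |S T. openin M1.mtopology S \<and> openin M2.mtopology T} \<and> z \<in> B \<and> B \<subseteq> U"
    by (auto simp: zeq)
  }
qed


lemma radius_prod:
  assumes X: "Metric_space X dX" and Y: "Metric_space Y dY"
    and ZY: "Z \<subseteq> Y" and Zne: "Z \<noteq> {}" and WX: "W \<subseteq> X" and WneX: "W \<noteq> X"
    and phiW: "\<phi> ` W \<subseteq> X"
  shows "radius (X\<times>Y) (max_dist dX dY) (W\<times>Z) (\<lambda>(x,y). (\<phi> x, y)) = radius X dX W \<phi>"
proof -
  interpret M1: Metric_space X dX by (fact X)
  interpret M2: Metric_space Y dY by (fact Y)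
  define f where "f p = max_dist dX dY p (ext_id (W\<times>Z) (\<lambda>(x,y). (\<phi> x, y)) p)" for p
  define g where "g x = dX x (ext_id W \<phi> x)" for x
  obtain z0 where z0: "z0 \<in> Z" using Zne by blast
  obtain x0 where x0: "x0 \<in> X" "x0 \<notin> W" using WX WneX by blast
  have g0: "g x0 = 0" using x0 by (simp add: g_def ext_id_def)
  have fg: "f (x,y) = g x" if "x \<in> X" "y \<in> Z" for x y
  proof (cases "x \<in> W")
    case True
    then have "\<phi> x \<in> X" using phiW by blast
    have "dY y y = 0" using that ZY by auto
    then show ?thesis using True that ZY M1.nonneg[of x "\<phi> x"]
      by (auto simp: f_def g_def ext_id_def max_dist_def max_def)
        (use M1.nonneg[of x "\<phi> x"] in linarith)
  next
    case False
    then show ?thesis using that ZY by (auto simp: f_def g_def ext_id_def max_dist_def)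
  qed
  have f0: "f (x,y) = 0" if "x \<in> X" "y \<in> Y" "y \<notin> Z" for x y
    using that by (auto simp: f_def ext_id_def max_dist_def)
  have "f ` (X\<times>Y) = g ` X"
  proof
    show "f ` (X\<times>Y) \<subseteq> g ` X"
    proof
      fix v assume "v \<in> f ` (X\<times>Y)"
      then obtain x y where xy: "x \<in> X" "y \<in> Y" "v = f (x,y)" by auto
      show "v \<in> g ` X"
      proof (cases "y \<in> Z")
        case True then show ?thesis using xy fg by auto
      next
        case False then show ?thesis using xy f0 g0 x0 by (metis image_eqI)
      qed
    qed
    show "g ` X \<subseteq> f ` (X\<times>Y)"
    proof
      fix v assume "v \<in> g ` X"
      then obtain x where x: "x \<in> X" "v = g x" by auto
      then have "v = f (x,z0)" using fg z0 by auto
      moreover have "(x,z0) \<in> X\<times>Y" using x z0 ZY by auto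
      ultimately show "v \<in> f ` (X\<times>Y)" by blast
    qed
  qed
  then show ?thesis unfolding radius_def f_def g_def by simp
qed

lemma prod_witness:
  assumes X: "Metric_space X dX" and Y: "Metric_space Y dY"
    and ncX: "\<not> compact_space (Metric_space.mtopology X dX)"
    and Zne: "Z \<noteq> {}" and Zc: "compactin (Metric_space.mtopology Y dY) Z"
    and Zo: "openin (Metric_space.mtopology Y dY) Z"
    and fw: "flex_witness X dX W \<phi>"
  shows "flex_witness (X \<times> Y) (max_dist dX dY) (\<lambda>n. W n \<times> Z) (\<lambda>n m (x, y). (\<phi> n m x, y))"
proof -
  interpret M1: Metric_space X dX by (fact X)
  interpret M2: Metric_space Y dY by (fact Y)
  note mtop = mtopology_max_dist[OF X Y]
  have ZY: "Z \<subseteq> Y" using compactin_subset_topspace[OF Zc] by simp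
  from fw have disj: "disjoint_family W"
    and WX: "\<And>n. W n \<subseteq> X" and Wc: "\<And>n. compactin M1.mtopology (W n)"
    and fin: "\<And>K. compactin M1.mtopology K \<Longrightarrow> finite {n. K \<inter> W n \<noteq> {}}"
    and hom: "\<And>n m. \<phi> n m \<in> Homeo_bd X dX (W n)"
    and dec: "\<And>n. decseq (\<lambda>m. radius X dX (W n) (\<phi> n m))"
    and lim: "\<And>n. (\<lambda>m. radius X dX (W n) (\<phi> n m)) \<longlonglongrightarrow> 0"
    and nz: "\<And>n m. radius X dX (W n) (\<phi> n m) \<noteq> 0"
    unfolding flex_witness_def by auto
  have WneX: "W n \<noteq> X" for n
    using Wc[of n] ncX by (auto simp: compact_space_def)
  have homn: "homeomorphic_map (subtopology M1.mtopology (W n)) (subtopology M1.mtopology (W n)) (\<phi> n m)"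
    and bdn: "\<And>s. s \<in> bdry_in X dX (W n) \<Longrightarrow> \<phi> n m s = s" for n m
    using hom[of n m] unfolding Homeo_bd_def by auto
  have phiW: "\<phi> n m ` W n \<subseteq> X" for n m
    using homeomorphic_imp_surjective_map[OF homn[of n m]] WX[of n] by auto
  have rad: "radius (X\<times>Y) (max_dist dX dY) (W n \<times> Z) ((\<lambda>n m (x, y). (\<phi> n m x, y)) n m)
        = radius X dX (W n) (\<phi> n m)" for n m
    using radius_prod[OF X Y ZY Zne WX[of n] WneX[of n] phiW[of n m]] by simp
  have H: "(\<lambda>(x, y). (\<phi> n m x, y)) \<in> Homeo_bd (X\<times>Y) (max_dist dX dY) (W n \<times> Z)" for n m
  proof -
    obtain g where g: "homeomorphic_maps (subtopology M1.mtopology (W n)) (subtopology M1.mtopology (W n)) (\<phi> n m) g"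
      using homn[of n m] homeomorphic_map_maps by blast
    have "homeomorphic_maps (subtopology M2.mtopology Z) (subtopology M2.mtopology Z) id id"
      by (simp add: homeomorphic_maps_id)
    then have "homeomorphic_maps (prod_topology (subtopology M1.mtopology (W n)) (subtopology M2.mtopology Z))
       (prod_topology (subtopology M1.mtopology (W n)) (subtopology M2.mtopology Z))
       (\<lambda>(x,y). (\<phi> n m x, id y)) (\<lambda>(x,y). (g x, id y))"
      using g homeomorphic_maps_prod by blast
    then have "homeomorphic_map (subtopology (Metric_space.mtopology (X\<times>Y) (max_dist dX dY)) (W n \<times> Z))
        (subtopology (Metric_space.mtopology (X\<times>Y) (max_dist dX dY)) (W n \<times> Z)) (\<lambda>(x,y). (\<phi> n m x, y))"
      unfolding mtop subtopology_Times homeomorphic_map_maps by auto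
    moreover have "\<forall>s\<in>bdry_in (X\<times>Y) (max_dist dX dY) (W n \<times> Z). (\<lambda>(x, y). (\<phi> n m x, y)) s = s"
    proof
      fix s assume s: "s \<in> bdry_in (X\<times>Y) (max_dist dX dY) (W n \<times> Z)"
      obtain x y where sxy: "s = (x,y)" by fastforce
      have eq: "X \<times> Y - W n \<times> Z = (X - W n) \<times> Y \<union> X \<times> (Y - Z)" by auto
      have cl: "M2.mtopology closure_of (Y - Z) = Y - Z"
        using Zo by (simp add: closure_of_closedin openin_closedin_eq)
      from s have "x \<in> W n" "y \<in> Z"
        "(x,y) \<in> (M1.mtopology closure_of (X - W n)) \<times> (M2.mtopology closure_of Y)
             \<union> (M1.mtopology closure_of X) \<times> (Y - Z)"
        unfolding bdry_in_def mtop sxy eq closure_of_Un closure_of_Times cl by auto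
      then have "x \<in> bdry_in X dX (W n)" unfolding bdry_in_def by auto
      then show "(\<lambda>(x, y). (\<phi> n m x, y)) s = s" using bdn sxy by auto
    qed
    ultimately show ?thesis unfolding Homeo_bd_def by blast
  qed
  show ?thesis
    unfolding flex_witness_def
  proof (intro conjI allI impI)
    show "disjoint_family (\<lambda>n. W n \<times> Z)"
      using disj unfolding disjoint_family_on_def by auto
    fix n
    show "W n \<times> Z \<subseteq> X \<times> Y" using WX ZY by auto
    show "compactin (Metric_space.mtopology (X \<times> Y) (max_dist dX dY)) (W n \<times> Z)"
      unfolding mtop compactin_Times using Wc Zc by auto
  next
    fix K assume K: "compactin (Metric_space.mtopology (X \<times> Y) (max_dist dX dY)) K"
    have "compactin M1.mtopology (fst ` K)"
      using image_compactin[OF K[unfolded mtop] continuous_map_fst] .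
    then have "finite {n. fst ` K \<inter> W n \<noteq> {}}" by (rule fin)
    then show "finite {n. K \<inter> (W n \<times> Z) \<noteq> {}}"
      by (rule finite_subset[rotated]) force
  next
    fix n m
    show "(\<lambda>n m (x, y). (\<phi> n m x, y)) n m \<in> Homeo_bd (X \<times> Y) (max_dist dX dY) (W n \<times> Z)"
      using H by simp
    show "radius (X \<times> Y) (max_dist dX dY) (W n \<times> Z) ((\<lambda>n m (x, y). (\<phi> n m x, y)) n m) \<noteq> 0"
      using rad nz by simp
  next
    fix n
    show "decseq (\<lambda>m. radius (X \<times> Y) (max_dist dX dY) (W n \<times> Z) ((\<lambda>n m (x, y). (\<phi> n m x, y)) n m))"
      using dec[of n] unfolding rad .
    show "(\<lambda>m. radius (X \<times> Y) (max_dist dX dY) (W n \<times> Z) ((\<lambda>n m (x, y). (\<phi> n m x, y)) n m)) \<longlonglongrightarrow> 0"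
      using lim[of n] unfolding rad .
  qed
qed


lemma prod_basic:
  assumes flexX: "flexible X dX" and Y: "Metric_space Y dY"
    and polY: "Polish_top (Metric_space.mtopology Y dY)"
    and lcY: "locally_compact_space (Metric_space.mtopology Y dY)" and Yne: "Y \<noteq> {}"
  shows "Metric_space (X\<times>Y) (max_dist dX dY) \<and>
     locally_compact_space (Metric_space.mtopology (X\<times>Y) (max_dist dX dY)) \<and>
     \<not> compact_space (Metric_space.mtopology (X\<times>Y) (max_dist dX dY)) \<and>
     Polish_top (Metric_space.mtopology (X\<times>Y) (max_dist dX dY))"
proof -
  from flexX have X: "Metric_space X dX"
    and lcX: "locally_compact_space (Metric_space.mtopology X dX)"
    and ncX: "\<not> compact_space (Metric_space.mtopology X dX)"
    and polX: "Polish_top (Metric_space.mtopology X dX)"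
    unfolding flexible_def by auto
  interpret M1: Metric_space X dX by (fact X)
  interpret M2: Metric_space Y dY by (fact Y)
  note mtop = mtopology_max_dist[OF X Y]
  have Xne: "X \<noteq> {}" using ncX by (auto simp: compact_space_def)
  have nt: "prod_topology M1.mtopology M2.mtopology \<noteq> trivial_topology"
    using Xne Yne by (simp flip: null_topspace_iff_trivial)
  have sep: "separable_space (prod_topology M1.mtopology M2.mtopology)"
  proof -
    obtain C1 where C1: "countable C1" "C1 \<subseteq> X" "M1.mtopology closure_of C1 = X"
      using polX unfolding Polish_top_def separable_space_def by auto
    obtain C2 where C2: "countable C2" "C2 \<subseteq> Y" "M2.mtopology closure_of C2 = Y"
      using polY unfolding Polish_top_def separable_space_def by auto
    show ?thesis unfolding separable_space_def
      by (rule exI[of _ "C1\<times>C2"]) (use C1 C2 in \<open>auto simp: closure_of_Times\<close>)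
  qed
  show ?thesis
    unfolding mtop
    using max_dist_metric[OF X Y] lcX lcY ncX nt polX polY sep
    by (auto simp: locally_compact_space_prod_topology compact_space_prod_topology
        Polish_top_def completely_metrizable_space_prod_topology)
qed

theorem mainTheorem9:
  fixes X :: "'a set" and dX :: "'a \<Rightarrow> 'a \<Rightarrow> real"
    and Y :: "'b set" and dY :: "'b \<Rightarrow> 'b \<Rightarrow> real"
  assumes flexX: "flexible X dX"
    and mY: "Metric_space Y dY"
    and polY: "Polish_top (Metric_space.mtopology Y dY)"
  shows "(locally_compact_space (Metric_space.mtopology Y dY) \<longrightarrow>
           (\<forall>Z. Z \<noteq> {} \<and> compactin (Metric_space.mtopology Y dY) Z
                \<and> openin (Metric_space.mtopology Y dY) Z
                \<and> closedin (Metric_space.mtopology Y dY) Z \<longrightarrow>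
              flexible (X \<times> Y) (max_dist dX dY) \<and>
              (\<forall>W \<phi>. flex_witness X dX W \<phi> \<longrightarrow>
                 flex_witness (X \<times> Y) (max_dist dX dY) (\<lambda>n. W n \<times> Z)
                   (\<lambda>n m (x, y). (\<phi> n m x, y)))))
       \<and> (Y \<noteq> {} \<and> compact_space (Metric_space.mtopology Y dY) \<longrightarrow>
            flexible (X \<times> Y) (max_dist dX dY))"
proof -
  from flexX have X: "Metric_space X dX"
    and ncX: "\<not> compact_space (Metric_space.mtopology X dX)"
    and ex: "\<exists>W \<phi>. flex_witness X dX W \<phi>"
    unfolding flexible_def by auto
  interpret M2: Metric_space Y dY by (fact mY)
  have A: "flexible (X \<times> Y) (max_dist dX dY) \<and>
              (\<forall>W \<phi>. flex_witness X dX W \<phi> \<longrightarrow>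
                 flex_witness (X \<times> Y) (max_dist dX dY) (\<lambda>n. W n \<times> Z)
                   (\<lambda>n m (x, y). (\<phi> n m x, y)))"
    if lcY: "locally_compact_space M2.mtopology" and Zne: "Z \<noteq> {}"
      and Zc: "compactin M2.mtopology Z" and Zo: "openin M2.mtopology Z" for Z
  proof -
    have Yne: "Y \<noteq> {}" using compactin_subset_topspace[OF Zc] Zne by auto
    have W: "\<forall>W \<phi>. flex_witness X dX W \<phi> \<longrightarrow>
                 flex_witness (X \<times> Y) (max_dist dX dY) (\<lambda>n. W n \<times> Z)
                   (\<lambda>n m (x, y). (\<phi> n m x, y))"
      using prod_witness[OF X mY ncX Zne Zc Zo] by blast
    then show ?thesis
      using prod_basic[OF flexX mY polY lcY Yne] ex unfolding flexible_def by blast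
  qed
  have P1: "locally_compact_space M2.mtopology \<longrightarrow>
           (\<forall>Z. Z \<noteq> {} \<and> compactin M2.mtopology Z
                \<and> openin M2.mtopology Z
                \<and> closedin M2.mtopology Z \<longrightarrow>
              flexible (X \<times> Y) (max_dist dX dY) \<and>
              (\<forall>W \<phi>. flex_witness X dX W \<phi> \<longrightarrow>
                 flex_witness (X \<times> Y) (max_dist dX dY) (\<lambda>n. W n \<times> Z)
                   (\<lambda>n m (x, y). (\<phi> n m x, y))))"
    using A by blast
  have P2: "Y \<noteq> {} \<and> compact_space M2.mtopology \<longrightarrow> flexible (X \<times> Y) (max_dist dX dY)"
  proof
    assume Y: "Y \<noteq> {} \<and> compact_space M2.mtopology"
    then have "compactin M2.mtopology Y" by (simp add: compact_space_def)
    moreover have "openin M2.mtopology Y" by (metis M2.topspace_mtopology openin_topspace)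
    ultimately show "flexible (X \<times> Y) (max_dist dX dY)"
      using A[of Y] Y compact_imp_locally_compact_space by blast
  qed
  show ?thesis using P1 P2 by blast
qed

end
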